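(* Let $C$ be a circle with centre $o$ and radius $r>0$, and let $p'$ be a point with $\lambda=|op'|<r$. Consider all triangles $\triangle abc$ with $a,b,c$ on $C$ and $p'\in\triangle abc$, and let $\mathrm{MinMax}$ be the minimum, over all such triangles, of the length of the longest edge. Then (1) if $\tfrac12 r\le\lambda<r$, $\mathrm{MinMax}=2\sqrt{r^2-\lambda^2}$; (2) if $0\le\lambda\le\tfrac12 r$, $\mathrm{MinMax}=\sqrt3\,r$. *)

theory Defs
  imports "HOL-Analysis.Analysis"
begin

definition longest_edge :: "real^2 \<Rightarrow> real^2 \<Rightarrow> real^2 \<Rightarrow> real" where
  "longest_edge a b c = max (dist a b) (max (dist b c) (dist c a))"

definition edge_values :: "real^2 \<Rightarrow> real \<Rightarrow> real^2 \<Rightarrow> real set" where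
  "edge_values ctr r p = {longest_edge a b c | a b c.
      dist a ctr = r \<and> dist b ctr = r \<and> dist c ctr = r \<and>
      a \<noteq> b \<and> b \<noteq> c \<and> c \<noteq> a \<and> p \<in> convex hull {a, b, c}}"

definition is_minimum :: "real \<Rightarrow> real set \<Rightarrow> bool" where
  "is_minimum m S \<longleftrightarrow> m \<in> S \<and> (\<forall>x\<in>S. m \<le> x)"

end

theory Submission
  imports Defs
 begin

lemma sign_aux:
  fixes a b c P R t :: real
  assumes t: "t>0" and R: "R>0" and ct: "c*t = a*b + P*R"
    and Ha: "a^2 + P^2 = t^2" and Hb: "b^2+R^2=t^2"
    and bc: "b \<le> c" and ha: "-t/2 < a" and hb: "-t/2<b"
  shows "P \<ge> 0"
proof (rule ccontr)
  assume "\<not> P \<ge> 0" hence P: "P < 0" by simp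
  have "a^2 \<le> t^2" using Ha zero_le_power2[of P] by linarith
  hence at: "a \<le> t" using t by (smt (verit) power2_le_imp_le)
  have "b*t \<le> c*t" using bc t by (simp add: mult_right_mono)
  hence ge: "P*R \<ge> b*(t - a)" using ct by (simp add: algebra_simps)
  moreover have lt: "P*R < 0" using P R by (simp add: mult_neg_pos)
  ultimately have neg: "b*(t-a) < 0" by linarith
  hence "a < t" using at by (cases "a = t") auto
  hence "b < 0" using neg by (smt (verit) mult_nonneg_nonneg)
  have "\<bar>P*R\<bar> \<le> \<bar>b*(t-a)\<bar>" using ge lt by linarith
  hence "(P*R)^2 \<le> (b*(t-a))^2" by (simp add: abs_le_square_iff)
  moreover have "(P*R)^2 = (t^2-a^2)*(t^2-b^2)"
  proof -
    have "P^2 = t^2-a^2" "R^2 = t^2-b^2" using Ha Hb by linarith+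
    thus ?thesis by (simp add: power_mult_distrib)
  qed
  ultimately have "(t^2-a^2)*(t^2-b^2) \<le> b^2*(t-a)^2" by (simp add: power_mult_distrib)
  hence "(t-a)*((t+a)*(t^2-b^2) - b^2*(t-a)) \<le> 0"
    by (simp add: power2_eq_square algebra_simps)
  hence "(t+a)*(t^2-b^2) - b^2*(t-a) \<le> 0" using \<open>a < t\<close>
    by (simp add: mult_le_0_iff)
  hence "t*(t^2 + a*t - 2*b^2) \<le> 0" by (simp add: power2_eq_square algebra_simps)
  hence "t^2 + a*t - 2*b^2 \<le> 0" using t by (simp add: mult_le_0_iff)
  moreover have "b^2 < t^2/4" using hb \<open>b<0\<close>
    proof -
    have "-b < t/2" "0 < -b" using hb \<open>b<0\<close> by auto
    hence "(-b)^2 < (t/2)^2" using power_strict_mono[of "-b" "t/2" 2] by auto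
    thus ?thesis by (simp add: power2_eq_square)
  qed
  ultimately have "a*t < -(t^2/2)" by linarith
  hence "(a + t/2)*t < 0" by (simp add: power2_eq_square algebra_simps)
  hence "a + t/2 < 0" using t by (simp add: mult_less_0_iff)
  hence "a < -t/2" by simp
  thus False using ha by simp
qed

lemma mid_pos:
  fixes a b c P Q R t :: real
  assumes t: "t>0" and R: "R>0" and H1: "R*a = Q*t + P*b" and H2: "R*c = Q*b + P*t"
    and H3: "R^2*t = Q^2*t + P^2*t + 2*P*Q*b"
    and Ha: "a^2 + P^2 = t^2" and Hc: "c^2 + Q^2 = t^2" and Hb: "b^2+R^2=t^2"
    and ba: "b \<le> a" and bc: "b \<le> c" and ha: "-t/2 < a" and hb: "-t/2<b" and hc: "-t/2 < c"
  shows "t + b \<le> a + c"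
proof -
  have Qt: "Q*t = R*a - P*b" using H1 by simp
  have Pt: "P*t = R*c - Q*b" using H2 by simp
  have R2: "R^2 = t^2 - b^2" using Hb by simp
  have "R*(c*t) = (R*c)*t" by simp
  also have "\<dots> = (Q*t)*b + P*t^2" unfolding H2 by (simp add: power2_eq_square algebra_simps)
  also have "\<dots> = R*(a*b) + P*(t^2-b^2)" unfolding Qt by (simp add: power2_eq_square algebra_simps)
  also have "\<dots> = R*(a*b + P*R)" unfolding R2[symmetric] by (simp add: power2_eq_square algebra_simps)
  finally have ct: "c*t = a*b + P*R" using R by simp
  have "R*(a*t) = (R*a)*t" by simp
  also have "\<dots> = Q*t^2 + (P*t)*b" unfolding H1 by (simp add: power2_eq_square algebra_simps)
  also have "\<dots> = R*(b*c) + Q*(t^2-b^2)" unfolding Pt by (simp add: power2_eq_square algebra_simps)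
  also have "\<dots> = R*(c*b + Q*R)" unfolding R2[symmetric] by (simp add: power2_eq_square algebra_simps)
  finally have at: "a*t = c*b + Q*R" using R by simp
  have P: "P \<ge> 0" by (rule sign_aux[OF t R ct Ha Hb bc ha hb])
  have Q: "Q \<ge> 0" by (rule sign_aux[OF t R at Hc Hb ba hc hb])
  have "b^2 \<le> t^2" using Hb zero_le_power2[of R] by linarith
  hence bt: "b \<le> t" using t by (smt (verit) power2_le_imp_le)
  have "2*P*Q*b \<le> 2*P*Q*t" using P Q bt by (simp add: mult_left_mono)
  hence "R^2*t \<le> (P+Q)^2*t" using H3 by (simp add: power2_eq_square algebra_simps)
  hence "R^2 \<le> (P+Q)^2" using t by simp
  hence RPQ: "R \<le> P+Q" using P Q by (smt (verit) power2_le_imp_le)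
  have eq: "R*(a+c) = (P+Q)*(t+b)" using H1 H2 by (simp add: algebra_simps)
  have "R*(t+b) \<le> (P+Q)*(t+b)" using RPQ hb t by (intro mult_right_mono) auto
  hence "R*(t+b) \<le> R*(a+c)" using eq by simp
  thus ?thesis using R by simp
qed

lemma mid_coords:
  fixes u1 u2 y1 y2 w1 w2 t :: real
  assumes t: "t>0" and nu: "u1^2+u2^2 = t" and ny: "y1^2+y2^2 = t" and nw: "w1^2+w2^2 = t"
    and ba: "u1*w1+u2*w2 \<le> u1*y1+u2*y2" and bc: "u1*w1+u2*w2 \<le> y1*w1+y2*w2"
    and ha: "-t/2 < u1*y1+u2*y2" and hb: "-t/2 < u1*w1+u2*w2" and hc: "-t/2 < y1*w1+y2*w2"
  shows "t + (u1*w1+u2*w2) \<le> (u1*y1+u2*y2) + (y1*w1+y2*w2)"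
proof -
  define a where "a = u1*y1+u2*y2"
  define b where "b = u1*w1+u2*w2"
  define c where "c = y1*w1+y2*w2"
  define P where "P = u1*y2 - u2*y1"
  define Q where "Q = y1*w2 - y2*w1"
  define R where "R = u1*w2 - u2*w1"
  have e1: "R*y1 = Q*u1 + P*w1" "R*y2 = Q*u2 + P*w2" unfolding P_def Q_def R_def by algebra+
  have H1: "R*a = Q*t + P*b" unfolding nu[symmetric] a_def b_def P_def Q_def R_def by algebra
  have H2: "R*c = Q*b + P*t" unfolding nw[symmetric] c_def b_def P_def Q_def R_def by algebra
  have "R^2*t = (R*y1)^2 + (R*y2)^2" unfolding ny[symmetric] by (simp add: power2_eq_square algebra_simps)
  also have "\<dots> = Q^2*(u1^2+u2^2) + P^2*(w1^2+w2^2) + 2*P*Q*b" unfolding e1 b_def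
    by (simp add: power2_eq_square algebra_simps)
  finally have H3: "R^2*t = Q^2*t + P^2*t + 2*P*Q*b" using nu nw by simp
  have Ha: "a^2 + P^2 = t^2"
  proof -
    have "a^2 + P^2 = (u1^2+u2^2)*(y1^2+y2^2)" unfolding a_def P_def by algebra
    thus ?thesis using nu ny by (simp add: power2_eq_square)
  qed
  have Hc: "c^2 + Q^2 = t^2"
  proof -
    have "c^2 + Q^2 = (y1^2+y2^2)*(w1^2+w2^2)" unfolding c_def Q_def by algebra
    thus ?thesis using nw ny by (simp add: power2_eq_square)
  qed
  have Hb: "b^2 + R^2 = t^2"
  proof -
    have "b^2 + R^2 = (u1^2+u2^2)*(w1^2+w2^2)" unfolding b_def R_def by algebra
    thus ?thesis using nw nu by (simp add: power2_eq_square)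
  qed
  note hyps = ba[folded a_def b_def c_def] bc[folded a_def b_def c_def]
     ha[folded a_def b_def c_def] hb[folded a_def b_def c_def] hc[folded a_def b_def c_def]
  have "t + b \<le> a + c"
  proof (cases "R = 0")
    case True
    hence "b^2 = t^2" using Hb by simp
    hence "b = t \<or> b = -t" by (simp add: power2_eq_iff)
    hence bt: "b = t" using hyps t by auto
    have "a^2 \<le> t^2" using Ha zero_le_power2[of P] by linarith
    hence "a \<le> t" using t by (smt (verit) power2_le_imp_le)
    moreover have "c^2 \<le> t^2" using Hc zero_le_power2[of Q] by linarith
    hence "c \<le> t" using t by (smt (verit) power2_le_imp_le)
    ultimately show ?thesis using hyps bt by linarith
  next
    case False
    show ?thesis
    proof (cases "R > 0")
      case True
      show ?thesis by (rule mid_pos[OF t True H1 H2 H3 Ha Hc Hb hyps])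
    next
      case False
      hence R': "-R > 0" using \<open>R \<noteq> 0\<close> by simp
      have H1': "(-R)*a = (-Q)*t + (-P)*b" using H1 by simp
      have H2': "(-R)*c = (-Q)*b + (-P)*t" using H2 by simp
      have H3': "(-R)^2*t = (-Q)^2*t + (-P)^2*t + 2*(-P)*(-Q)*b" using H3 by simp
      have Ha': "a^2 + (-P)^2 = t^2" using Ha by simp
      have Hc': "c^2 + (-Q)^2 = t^2" using Hc by simp
      have Hb': "b^2 + (-R)^2 = t^2" using Hb by simp
      show ?thesis by (rule mid_pos[OF t R' H1' H2' H3' Ha' Hc' Hb' hyps])
    qed
  qed
  thus ?thesis unfolding a_def b_def c_def .
qed

lemma inner2: "inner (a::real^2) b = a$1*b$1 + a$2*b$2"
  by (simp add: inner_vec_def sum_2)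

lemma low_pair:
  fixes ctr p a b c :: "real^2" and r :: real
  assumes r: "r>0" and da: "dist a ctr = r" and db: "dist b ctr = r" and dc: "dist c ctr = r"
    and hull: "p \<in> convex hull {a,b,c}"
    and ba: "inner (a-ctr) (c-ctr) \<le> inner (a-ctr) (b-ctr)"
    and bc: "inner (a-ctr) (c-ctr) \<le> inner (b-ctr) (c-ctr)"
    and ha: "-(r^2)/2 < inner (a-ctr) (b-ctr)"
    and hb: "-(r^2)/2 < inner (a-ctr) (c-ctr)"
    and hc: "-(r^2)/2 < inner (b-ctr) (c-ctr)"
  shows "2* sqrt(r^2 - (dist ctr p)^2) \<le> dist a c"
proof -
  define u where "u = a - ctr"
  define v where "v = b - ctr"
  define w where "w = c - ctr"
  define x where "x = p - ctr"
  define t where "t = r^2"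
  have t: "t > 0" using r unfolding t_def by simp
  have nu: "inner u u = t" using da unfolding u_def t_def dist_norm by (simp add: power2_norm_eq_inner[symmetric])
  have nv: "inner v v = t" using db unfolding v_def t_def dist_norm by (simp add: power2_norm_eq_inner[symmetric])
  have nw: "inner w w = t" using dc unfolding w_def t_def dist_norm by (simp add: power2_norm_eq_inner[symmetric])
  have mid: "t + inner u w \<le> inner u v + inner v w"
    using mid_coords[of t "u$1" "u$2" "v$1" "v$2" "w$1" "w$2"] t nu nv nw ba bc ha hb hc
    unfolding u_def[symmetric] v_def[symmetric] w_def[symmetric] t_def[symmetric] inner2
    by (simp add: power2_eq_square)
  obtain al be ga where wts: "0 \<le> al" "0 \<le> be" "0 \<le> ga" "al + be + ga = 1"
    and pe: "p = al *\<^sub>R a + be *\<^sub>R b + ga *\<^sub>R c"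
    using hull unfolding convex_hull_3 by blast
  have xe: "x = al *\<^sub>R u + be *\<^sub>R v + ga *\<^sub>R w"
  proof -
    have "x = al *\<^sub>R a + be *\<^sub>R b + ga *\<^sub>R c - (al + be + ga) *\<^sub>R ctr"
      unfolding x_def pe wts(4) by simp
    thus ?thesis unfolding u_def v_def w_def by (simp add: algebra_simps)
  qed
  define n where "n = u + w"
  have nu': "inner n u = t + inner u w" unfolding n_def using nu by (simp add: inner_add_left inner_commute[of w u])
  have nw': "inner n w = t + inner u w" unfolding n_def using nw by (simp add: inner_add_left)
  have nv': "inner n v \<ge> t + inner u w" unfolding n_def using mid by (simp add: inner_add_left inner_commute[of w v])
  have "inner n x = al * inner n u + be * inner n v + ga * inner n w"
    unfolding xe by (simp add: inner_add_right)
  also have "\<dots> \<ge> al * (t + inner u w) + be * (t + inner u w) + ga * (t + inner u w)"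
    using nu' nw' nv' wts by (simp add: mult_left_mono)
  also have "al * (t + inner u w) + be * (t + inner u w) + ga * (t + inner u w) = (al+be+ga) * (t + inner u w)"
    by (simp add: algebra_simps)
  finally have "inner n x \<ge> t + inner u w" using wts(4) by simp
  hence "t + inner u w \<le> norm n * norm x" using norm_cauchy_schwarz[of n x] by linarith
  moreover have nn: "(norm n)^2 = 2*(t + inner u w)" unfolding n_def power2_norm_eq_inner
    using nu nw by (simp add: inner_add_left inner_add_right inner_commute)
  ultimately have "(norm n)^2 \<le> 2 * norm n * norm x" by simp
  hence N: "(norm n)^2 \<le> 4 * (norm x)^2"
  proof (cases "norm n = 0")
    case False
    hence "norm n > 0" by simp
    moreover assume "(norm n)^2 \<le> 2 * norm n * norm x"
    ultimately have "norm n \<le> 2 * norm x" by (simp add: power2_eq_square)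
    hence "(norm n)^2 \<le> (2*norm x)^2" using power_mono[of "norm n" "2*norm x" 2] by simp
    thus ?thesis by (simp add: power2_eq_square)
  qed simp
  have "(dist a c)^2 = inner (u - w) (u - w)" unfolding dist_norm u_def w_def power2_norm_eq_inner by simp
  also have "\<dots> = 2*t - 2*inner u w" using nu nw by (simp add: inner_diff_left inner_diff_right inner_commute)
  finally have "(dist a c)^2 = 4*t - (norm n)^2" using nn by simp
  hence dd: "4*(r^2 - (dist ctr p)^2) \<le> (dist a c)^2" using N unfolding t_def x_def dist_norm
    by (simp add: norm_minus_commute)
  have "2* sqrt(r^2 - (dist ctr p)^2) = sqrt(4*(r^2 - (dist ctr p)^2))"
    by (simp only: real_sqrt_mult) simp
  also have "\<dots> \<le> sqrt((dist a c)^2)" using dd by (rule real_sqrt_le_mono)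
  also have "\<dots> = dist a c" by simp
  finally show ?thesis .
qed

lemma edge_big:
  fixes ctr a b :: "real^2"
  assumes r: "r>0" and da: "dist a ctr = r" and db: "dist b ctr = r"
    and h: "inner (a-ctr) (b-ctr) \<le> -(r^2)/2"
  shows "sqrt 3 * r \<le> dist a b"
proof -
  have "(dist a b)^2 = inner ((a-ctr) - (b-ctr)) ((a-ctr) - (b-ctr))"
    unfolding dist_norm power2_norm_eq_inner by simp
  also have "\<dots> = inner (a-ctr) (a-ctr) + inner (b-ctr) (b-ctr) - 2 * inner (a-ctr) (b-ctr)"
    by (simp add: inner_diff_left inner_diff_right inner_commute)
  also have "inner (a-ctr) (a-ctr) = r^2" using da unfolding dist_norm power2_norm_eq_inner[symmetric] by simp
  also have "inner (b-ctr) (b-ctr) = r^2" using db unfolding dist_norm power2_norm_eq_inner[symmetric] by simp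
  finally have "3 * r^2 \<le> (dist a b)^2" using h by simp
  hence "sqrt (3 * r^2) \<le> sqrt ((dist a b)^2)" by (rule real_sqrt_le_mono)
  thus ?thesis using r by (simp add: real_sqrt_mult)
qed

lemma lower:
  fixes ctr p a b c :: "real^2" and r :: real
  assumes r: "r>0" and da: "dist a ctr = r" and db: "dist b ctr = r" and dc: "dist c ctr = r"
    and hull: "p \<in> convex hull {a,b,c}"
  shows "sqrt 3 * r \<le> longest_edge a b c \<or> 2 * sqrt(r^2 - (dist ctr p)^2) \<le> longest_edge a b c"
proof -
  define A where "A = inner (a-ctr) (b-ctr)"
  define B where "B = inner (a-ctr) (c-ctr)"
  define C where "C = inner (b-ctr) (c-ctr)"
  have le: "dist a b \<le> longest_edge a b c" "dist b c \<le> longest_edge a b c" "dist a c \<le> longest_edge a b c"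
    unfolding longest_edge_def by (auto simp: dist_commute)
  show ?thesis
  proof (cases "A \<le> -(r^2)/2 \<or> B \<le> -(r^2)/2 \<or> C \<le> -(r^2)/2")
    case True
    then show ?thesis
    proof (elim disjE)
      assume "A \<le> -(r^2)/2"
      hence "sqrt 3 * r \<le> dist a b" using edge_big[OF r da db] unfolding A_def by simp
      thus ?thesis using le by linarith
    next
      assume "B \<le> -(r^2)/2"
      hence "sqrt 3 * r \<le> dist a c" using edge_big[OF r da dc] unfolding B_def by simp
      thus ?thesis using le by linarith
    next
      assume "C \<le> -(r^2)/2"
      hence "sqrt 3 * r \<le> dist b c" using edge_big[OF r db dc] unfolding C_def by simp
      thus ?thesis using le by linarith
    qed
  next
    case False
    hence hA: "-(r^2)/2 < A" and hB: "-(r^2)/2 < B" and hC: "-(r^2)/2 < C" by auto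
    have "2 * sqrt(r^2 - (dist ctr p)^2) \<le> longest_edge a b c"
    proof (cases "B \<le> A \<and> B \<le> C")
      case True
      hence "2 * sqrt(r^2 - (dist ctr p)^2) \<le> dist a c"
        using low_pair[OF r da db dc hull] hA hB hC unfolding A_def B_def C_def by simp
      thus ?thesis using le by linarith
    next
      case False
      show ?thesis
      proof (cases "A \<le> C")
        case True
        hence m: "A \<le> B" "A \<le> C" using False by auto
        have hull': "p \<in> convex hull {a,c,b}" using hull by (simp add: insert_commute)
        have "2 * sqrt(r^2 - (dist ctr p)^2) \<le> dist a b"
          using low_pair[OF r da dc db hull'] m hA hB hC unfolding A_def B_def C_def
          by (simp add: inner_commute)
        thus ?thesis using le by linarith
      next
        case False
        hence m: "C \<le> A" "C \<le> B" using \<open>\<not> (B \<le> A \<and> B \<le> C)\<close> by auto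
        have hull': "p \<in> convex hull {b,a,c}" using hull by (simp add: insert_commute)
        have "2 * sqrt(r^2 - (dist ctr p)^2) \<le> dist b c"
          using low_pair[OF r db da dc hull'] m hA hB hC unfolding A_def B_def C_def
          by (simp add: inner_commute)
        thus ?thesis using le by linarith
      qed
    qed
    thus ?thesis by simp
  qed
qed

lemma dist2: "dist (a::real^2) b = sqrt ((a$1 - b$1)^2 + (a$2-b$2)^2)"
  by (simp add: dist_norm norm_eq_sqrt_inner inner_vec_def sum_2 power2_eq_square)

lemma dist_vv: "dist (ctr + vector[s1,s2]) (ctr + vector[t1,t2] :: real^2) = sqrt((s1-t1)^2+(s2-t2)^2)"
  by (simp add: dist2)

lemma dist_vc: "dist (ctr + vector[s1,s2] :: real^2) ctr = sqrt(s1^2+s2^2)"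
  by (simp add: dist2)

lemma edge_valuesI:
  assumes "dist a ctr = r" "dist b ctr = r" "dist c ctr = r" "a \<noteq> b" "b \<noteq> c" "c \<noteq> a"
    "p \<in> convex hull {a,b,c}" "longest_edge a b c = m"
  shows "m \<in> edge_values ctr r p"
  unfolding edge_values_def using assms by blast

lemma memb_equi:
  fixes ctr p :: "real^2" and r :: real
  assumes r: "r > 0" and lam: "dist ctr p \<le> r/2"
  shows "sqrt 3 * r \<in> edge_values ctr r p"
proof -
  define x1 where "x1 = p$1 - ctr$1"
  define x2 where "x2 = p$2 - ctr$2"
  have l2: "x1^2 + x2^2 \<le> r^2/4"
  proof -
    have "dist ctr p = sqrt (x1^2+x2^2)" unfolding dist2 x1_def x2_def by (simp add: power2_commute)
    hence "sqrt (x1^2+x2^2) \<le> r/2" using lam by simp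
    hence "(sqrt (x1^2+x2^2))^2 \<le> (r/2)^2" by (rule power_mono) simp
    thus ?thesis by (simp add: power_divide)
  qed
  define q where "q = sqrt 3"
  have q2: "q^2 = 3" "q > 0" unfolding q_def by simp_all
  define a :: "real^2" where "a = ctr + vector[r, 0]"
  define b :: "real^2" where "b = ctr + vector[-r/2, r*q/2]"
  define c :: "real^2" where "c = ctr + vector[-r/2, -(r*q/2)]"
  have sq3: "sqrt (3 * r^2) = q * r" using r unfolding q_def by (simp add: real_sqrt_mult)
  have da: "dist a ctr = r" unfolding a_def dist_vc using r by simp
  have db: "dist b ctr = r" unfolding b_def dist_vc using r q2
    by (simp add: power_divide power_mult_distrib real_sqrt_unique)
  have dc: "dist c ctr = r" unfolding c_def dist_vc using r q2
    by (simp add: power_divide power_mult_distrib real_sqrt_unique)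
  have dab: "dist a b = q * r" unfolding a_def b_def dist_vv
  proof -
    have "(r - - r / 2)\<^sup>2 + (0 - r * q / 2)\<^sup>2 = 3 * r^2" using q2
      by (simp add: power2_eq_square field_simps)
    thus "sqrt ((r - - r / 2)\<^sup>2 + (0 - r * q / 2)\<^sup>2) = q * r" using sq3 by simp
  qed
  have dbc: "dist b c = q * r" unfolding c_def b_def dist_vv
  proof -
    have "(- r / 2 - - r / 2)\<^sup>2 + (r * q / 2 - - (r * q / 2))\<^sup>2 = 3 * r^2" using q2
      by (simp add: power2_eq_square field_simps)
    thus "sqrt ((- r / 2 - - r / 2)\<^sup>2 + (r * q / 2 - - (r * q / 2))\<^sup>2) = q * r" using sq3 by simp
  qed
  have dca: "dist c a = q * r" unfolding a_def c_def dist_vv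
  proof -
    have "(- r / 2 - r)\<^sup>2 + (- (r * q / 2) - 0)\<^sup>2 = 3 * r^2" using q2
      by (simp add: power2_eq_square field_simps)
    thus "sqrt ((- r / 2 - r)\<^sup>2 + (- (r * q / 2) - 0)\<^sup>2) = q * r" using sq3 by simp
  qed
  have pos: "q * r > 0" using q2 r by simp
  have neq: "a \<noteq> b" "b \<noteq> c" "c \<noteq> a" using dab dbc dca pos by auto
  have L: "longest_edge a b c = q * r" unfolding longest_edge_def dab dbc dca by simp
  define al where "al = (r + 2*x1)/(3*r)"
  define be where "be = (r - x1 + q*x2)/(3*r)"
  define ga where "ga = (r - x1 - q*x2)/(3*r)"
  have x1b: "x1^2 \<le> r^2/4" using l2 zero_le_power2[of x2] by linarith
  hence "\<bar>x1\<bar> \<le> r/2" using r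
    by (metis abs_le_square_iff abs_of_pos half_gt_zero power_divide real_sqrt_four real_sqrt_pow2 zero_le_numeral zero_less_numeral power2_abs)
  have l4: "4*(x1^2+x2^2) \<le> r^2" using l2 by simp
  have cs: "(x1 - q*x2)^2 \<le> r^2" "(x1 + q*x2)^2 \<le> r^2"
  proof -
    have "(x1 - q*x2)^2 + (q*x1 + x2)^2 = (1+q^2)*(x1^2+x2^2)" by (simp add: power2_eq_square algebra_simps)
    hence "(x1 - q*x2)^2 + (q*x1 + x2)^2 = 4*(x1^2+x2^2)" using q2 by simp
    thus "(x1 - q*x2)^2 \<le> r^2" using l4 zero_le_power2[of "q*x1+x2"] by linarith
    have "(x1 + q*x2)^2 + (q*x1 - x2)^2 = (1+q^2)*(x1^2+x2^2)" by (simp add: power2_eq_square algebra_simps)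
    hence "(x1 + q*x2)^2 + (q*x1 - x2)^2 = 4*(x1^2+x2^2)" using q2 by simp
    thus "(x1 + q*x2)^2 \<le> r^2" using l4 zero_le_power2[of "q*x1-x2"] by linarith
  qed
  have ab: "\<bar>x1 - q*x2\<bar> \<le> r" "\<bar>x1 + q*x2\<bar> \<le> r" using cs r
    by (metis abs_le_square_iff abs_of_pos)+
  have w: "0 \<le> al" "0 \<le> be" "0 \<le> ga" "al + be + ga = 1"
    unfolding al_def be_def ga_def using r \<open>\<bar>x1\<bar> \<le> r/2\<close> ab
    by (auto simp: field_simps)
  have qq: "q*q = 3" using q2 by (simp add: power2_eq_square)
  have "p = al *\<^sub>R a + be *\<^sub>R b + ga *\<^sub>R c"
  proof -
    have p1: "p$1 = ctr$1 + x1" unfolding x1_def by simp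
    have e1: "p$1 = al * a$1 + be * b$1 + ga * c$1"
      unfolding p1 a_def b_def c_def al_def be_def ga_def using r
      by (simp add: field_simps)
    have "(be - ga) * (r*q/2) = (q*q)*x2/3" unfolding be_def ga_def using r
      by (simp add: field_simps)
    hence "p$2 = ctr$2 + (be - ga) * (r*q/2)" unfolding qq x2_def by simp
    moreover have "al * a$2 + be * b$2 + ga * c$2 = (al+be+ga)*ctr$2 + (be - ga) * (r*q/2)"
      unfolding a_def b_def c_def by (simp add: field_simps)
    ultimately have e2: "p$2 = al * a$2 + be * b$2 + ga * c$2"
      using w(4) by simp
    show ?thesis using e1 e2 by (simp add: vec_eq_iff forall_2)
  qed
  hence "p \<in> convex hull {a,b,c}" unfolding convex_hull_3 using w by blast
  moreover have "longest_edge a b c = sqrt 3 * r" using L unfolding q_def .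
  ultimately show ?thesis using edge_valuesI[OF da db dc neq] by blast
qed

lemma memb_chord:
  fixes ctr p :: "real^2" and r :: real
  assumes r: "r > 0" and lpos: "0 < dist ctr p" and lr: "dist ctr p < r"
  shows "2 * sqrt (r^2 - (dist ctr p)^2) \<in> edge_values ctr r p"
proof -
  define lam where "lam = dist ctr p"
  define x1 where "x1 = p$1 - ctr$1"
  define x2 where "x2 = p$2 - ctr$2"
  have lam: "lam = sqrt (x1^2+x2^2)" unfolding lam_def dist2 x1_def x2_def by (simp add: power2_commute)
  hence lam2: "lam^2 = x1^2 + x2^2" by simp
  have lp: "lam > 0" "lam < r" using lpos lr unfolding lam_def by auto
  define e1 where "e1 = x1/lam"
  define e2 where "e2 = x2/lam"
  have x1e: "x1 = lam*e1" and x2e: "x2 = lam*e2" unfolding e1_def e2_def using lp by auto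
  have ee: "e1^2 + e2^2 = 1"
  proof -
    have "lam^2 * (e1^2+e2^2) = lam^2" using lam2 unfolding x1e x2e by (simp add: power_mult_distrib algebra_simps)
    thus ?thesis using lp by simp
  qed
  define h where "h = sqrt (r^2 - lam^2)"
  have hr: "lam^2 < r^2" using lp by (simp add: power_strict_mono)
  have h: "h > 0" "h^2 = r^2 - lam^2" unfolding h_def using hr by simp_all
  define a :: "real^2" where "a = ctr + vector[lam*e1 - h*e2, lam*e2 + h*e1]"
  define b :: "real^2" where "b = ctr + vector[lam*e1 + h*e2, lam*e2 - h*e1]"
  define c :: "real^2" where "c = ctr + vector[r*e1, r*e2]"
  have da: "dist a ctr = r" unfolding a_def dist_vc
  proof -
    have "(lam*e1 - h*e2)^2 + (lam*e2 + h*e1)^2 = (lam^2+h^2)*(e1^2+e2^2)" by (simp add: power2_eq_square algebra_simps)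
    thus "sqrt ((lam*e1 - h*e2)^2 + (lam*e2 + h*e1)^2) = r" using ee h r by simp
  qed
  have db: "dist b ctr = r" unfolding b_def dist_vc
  proof -
    have "(lam*e1 + h*e2)^2 + (lam*e2 - h*e1)^2 = (lam^2+h^2)*(e1^2+e2^2)" by (simp add: power2_eq_square algebra_simps)
    thus "sqrt ((lam*e1 + h*e2)^2 + (lam*e2 - h*e1)^2) = r" using ee h r by simp
  qed
  have dc: "dist c ctr = r" unfolding c_def dist_vc
  proof -
    have "(r*e1)^2 + (r*e2)^2 = r^2*(e1^2+e2^2)" by (simp add: power2_eq_square algebra_simps)
    thus "sqrt ((r*e1)^2 + (r*e2)^2) = r" using ee r by simp
  qed
  have dab: "dist a b = 2*h" unfolding a_def b_def dist_vv
  proof -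
    have "(lam*e1 - h*e2 - (lam*e1 + h*e2))^2 + (lam*e2 + h*e1 - (lam*e2 - h*e1))^2 = (2*h)^2*(e1^2+e2^2)"
      by (simp add: power2_eq_square algebra_simps)
    hence eq: "(lam*e1 - h*e2 - (lam*e1 + h*e2))^2 + (lam*e2 + h*e1 - (lam*e2 - h*e1))^2 = (2*h)^2"
      using ee by simp
    show "sqrt ((lam*e1 - h*e2 - (lam*e1 + h*e2))^2 + (lam*e2 + h*e1 - (lam*e2 - h*e1))^2) = 2*h"
      unfolding eq using h(1) real_sqrt_abs[of "2*h"] by simp
  qed
  define D where "D = 2*r^2 - 2*r*lam"
  have D: "0 < D" "D \<le> (2*h)^2"
  proof -
    have "0 < 2*r*(r - lam)" using r lp by simp
    thus "0 < D" unfolding D_def by (simp add: power2_eq_square algebra_simps)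
    have "0 \<le> 2*(r-lam)*(r+2*lam)" using r lp by simp
    thus "D \<le> (2*h)^2" unfolding D_def using h by (simp add: power2_eq_square algebra_simps)
  qed
  have dbc: "dist b c = sqrt D" unfolding b_def c_def dist_vv
  proof -
    have "(lam*e1 + h*e2 - r*e1)^2 + (lam*e2 - h*e1 - r*e2)^2 = ((lam-r)^2+h^2)*(e1^2+e2^2)"
      by (simp add: power2_eq_square algebra_simps)
    also have "\<dots> = D" using ee h unfolding D_def by (simp add: power2_eq_square algebra_simps)
    finally show "sqrt ((lam*e1 + h*e2 - r*e1)^2 + (lam*e2 - h*e1 - r*e2)^2) = sqrt D" by simp
  qed
  have dca: "dist c a = sqrt D" unfolding a_def c_def dist_vv
  proof -
    have "(r*e1 - (lam*e1 - h*e2))^2 + (r*e2 - (lam*e2 + h*e1))^2 = ((lam-r)^2+h^2)*(e1^2+e2^2)"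
      by (simp add: power2_eq_square algebra_simps)
    also have "\<dots> = D" using ee h unfolding D_def by (simp add: power2_eq_square algebra_simps)
    finally show "sqrt ((r*e1 - (lam*e1 - h*e2))^2 + (r*e2 - (lam*e2 + h*e1))^2) = sqrt D" by simp
  qed
  have sD: "sqrt D \<le> 2*h"
  proof -
    have "sqrt D \<le> sqrt ((2*h)^2)" using D by (intro real_sqrt_le_mono) simp
    also have "\<dots> = 2*h" by (rule real_sqrt_unique) (use h(1) in auto)
    finally show ?thesis .
  qed
  have neq: "a \<noteq> b" "b \<noteq> c" "c \<noteq> a" using dab dbc dca h D by auto
  have L: "longest_edge a b c = 2 * h" unfolding longest_edge_def dab dbc dca using sD by simp
  have "p = (1/2) *\<^sub>R a + (1/2) *\<^sub>R b + 0 *\<^sub>R c"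
  proof -
    have p1: "p$1 = ctr$1 + lam*e1" unfolding x1e[symmetric] x1_def by simp
    have p2: "p$2 = ctr$2 + lam*e2" unfolding x2e[symmetric] x2_def by simp
    show ?thesis unfolding vec_eq_iff forall_2 a_def b_def using p1 p2 by (simp add: field_simps)
  qed
  hence "p \<in> convex hull {a,b,c}" unfolding convex_hull_3
    by (intro CollectI exI[of _ "1/2"] exI[of _ "1/2"] exI[of _ 0]) simp
  moreover have "longest_edge a b c = 2 * sqrt (r^2 - (dist ctr p)^2)" using L unfolding h_def lam_def .
  ultimately show ?thesis using edge_valuesI[OF da db dc neq] by blast
qed

lemma cmp_vals:
  fixes r l :: real
  assumes r: "r > 0" and l: "0 \<le> l"
  shows "r/2 \<le> l \<Longrightarrow> 2 * sqrt (r^2 - l^2) \<le> sqrt 3 * r"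
    and "l \<le> r/2 \<Longrightarrow> sqrt 3 * r \<le> 2 * sqrt (r^2 - l^2)"
proof -
  have e1: "2 * sqrt (r^2 - l^2) = sqrt (4*(r^2 - l^2))" by (simp only: real_sqrt_mult) simp
  have e2: "sqrt 3 * r = sqrt (3*r^2)" using r by (simp add: real_sqrt_mult)
  show "r/2 \<le> l \<Longrightarrow> 2 * sqrt (r^2 - l^2) \<le> sqrt 3 * r"
  proof -
    assume "r/2 \<le> l"
    hence "(r/2)^2 \<le> l^2" using r by (intro power_mono) auto
    hence "4*(r^2 - l^2) \<le> 3*r^2" by (simp add: power_divide)
    thus ?thesis unfolding e1 e2 by (rule real_sqrt_le_mono)
  qed
  show "l \<le> r/2 \<Longrightarrow> sqrt 3 * r \<le> 2 * sqrt (r^2 - l^2)"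
  proof -
    assume "l \<le> r/2"
    hence "l^2 \<le> (r/2)^2" using l by (intro power_mono) auto
    hence "3*r^2 \<le> 4*(r^2 - l^2)" by (simp add: power_divide)
    thus ?thesis unfolding e1 e2 by (rule real_sqrt_le_mono)
  qed
qed

theorem mainTheorem15:
  fixes ctr p :: "real^2" and r :: real
  assumes "r > 0" and "dist ctr p < r"
  shows "(r / 2 \<le> dist ctr p \<longrightarrow>
            is_minimum (2 * sqrt (r^2 - (dist ctr p)^2)) (edge_values ctr r p))
       \<and> (dist ctr p \<le> r / 2 \<longrightarrow>
            is_minimum (sqrt 3 * r) (edge_values ctr r p))"
proof -
  have r: "r > 0" using assms(1) .
  have low: "\<forall>x\<in>edge_values ctr r p. sqrt 3 * r \<le> x \<or> 2 * sqrt (r^2 - (dist ctr p)^2) \<le> x"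
    unfolding edge_values_def using lower[OF r] by blast
  have l0: "0 \<le> dist ctr p" by simp
  show ?thesis
  proof (intro conjI impI)
    assume h: "r / 2 \<le> dist ctr p"
    hence "0 < dist ctr p" using r by linarith
    hence m: "2 * sqrt (r^2 - (dist ctr p)^2) \<in> edge_values ctr r p" by (rule memb_chord[OF r _ assms(2)])
    show "is_minimum (2 * sqrt (r^2 - (dist ctr p)^2)) (edge_values ctr r p)"
      unfolding is_minimum_def using m low cmp_vals(1)[OF r l0 h] by fastforce
  next
    assume h: "dist ctr p \<le> r / 2"
    have m: "sqrt 3 * r \<in> edge_values ctr r p" by (rule memb_equi[OF r h])
    show "is_minimum (sqrt 3 * r) (edge_values ctr r p)"
      unfolding is_minimum_def using m low cmp_vals(2)[OF r l0 h] by fastforce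
  qed
qed
end
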